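(* For every Tychonoff space $X$, the following are equivalent: (1) $C_p(X)\models S_1(\Gamma_f,\Omega_f)$ for every $f\in C_p(X)$; (2) $X\models S_1(\Gamma_F,\Omega)$.
   Context: All spaces are Tychonoff; $C_p(X)$ is $C(X)$ with pointwise convergence topology. For $y$ in a space $Y$: $\Omega_y=\{A\subseteq Y: y\in\overline A\setminus A\}$, $\Gamma_y=\{A\subseteq Y: A$ infinite, $y\notin A$, every neighbourhood of $y$ contains all but finitely many points of $A\}$. A zero-set is $g^{-1}(0)$ for some $g\in C(X)$; a cozero-set is the complement of a zero-set. A cover $\mathcal U$ of $X$ always means $X=\bigcup\mathcal U$, $X\notin\mathcal U$. $\Omega$: open $\omega$-covers (every finite subset of $X$ lies in some member). A $\gamma$-cover is an infinite cover such that each point lies in all but finitely many members. $\Gamma_F$ is the family of $\gamma$-covers $\mathcal U$ of $X$ by cozero-sets that are $\gamma_F$-shrinkable: there exist zero-sets $F(U)\subseteq U$ ($U\in\mathcal U$) such that $\{F(U):U\in\mathcal U\}$ is a $\gamma$-cover of $X$. $S_1(\mathcal A,\mathcal B)$: for every sequence $(A_n)$ from $\mathcal A$ there are $b_n\in A_n$ with $\{b_n:n\in\omega\}\in\mathcal B$. *)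

theory Defs
  imports "HOL-Analysis.Analysis"
begin

definition tychonoff_space :: "'a topology \<Rightarrow> bool" where
  "tychonoff_space X \<longleftrightarrow> completely_regular_space X \<and> t1_space X"

text \<open>C_p(X): continuous real functions on X (extensional, i.e. undefined off the
  carrier), with the topology of pointwise convergence (subspace of the product).\<close>
definition Cp :: "'a topology \<Rightarrow> ('a \<Rightarrow> real) topology" where
  "Cp X = subtopology (powertop_real (topspace X))
            {f. continuous_map X euclideanreal f \<and> f \<in> extensional (topspace X)}"

definition Omega_at :: "'b topology \<Rightarrow> 'b \<Rightarrow> 'b set set" where
  "Omega_at Y y = {A. A \<subseteq> topspace Y \<and> y \<in> Y closure_of A \<and> y \<notin> A}"

definition Gamma_at :: "'b topology \<Rightarrow> 'b \<Rightarrow> 'b set set" where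
  "Gamma_at Y y = {A. A \<subseteq> topspace Y \<and> infinite A \<and> y \<notin> A \<and>
      (\<forall>U. openin Y U \<and> y \<in> U \<longrightarrow> finite (A - U))}"

definition S1 :: "'c set set \<Rightarrow> 'c set set \<Rightarrow> bool" where
  "S1 \<A> \<B> \<longleftrightarrow> (\<forall>A :: nat \<Rightarrow> 'c set. (\<forall>n. A n \<in> \<A>) \<longrightarrow>
      (\<exists>b. (\<forall>n. b n \<in> A n) \<and> range b \<in> \<B>))"

definition zero_set :: "'a topology \<Rightarrow> 'a set \<Rightarrow> bool" where
  "zero_set X Z \<longleftrightarrow> (\<exists>g. continuous_map X euclideanreal g \<and> Z = {x \<in> topspace X. g x = 0})"

definition cozero_set :: "'a topology \<Rightarrow> 'a set \<Rightarrow> bool" where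
  "cozero_set X U \<longleftrightarrow> (\<exists>Z. zero_set X Z \<and> U = topspace X - Z)"

definition is_cover :: "'a topology \<Rightarrow> 'a set set \<Rightarrow> bool" where
  "is_cover X \<U> \<longleftrightarrow> \<Union>\<U> = topspace X \<and> topspace X \<notin> \<U>"

definition omega_covers :: "'a topology \<Rightarrow> 'a set set set" where
  "omega_covers X = {\<U>. is_cover X \<U> \<and> (\<forall>U\<in>\<U>. openin X U) \<and>
      (\<forall>F. finite F \<and> F \<subseteq> topspace X \<longrightarrow> (\<exists>U\<in>\<U>. F \<subseteq> U))}"

definition is_gamma_cover :: "'a topology \<Rightarrow> 'a set set \<Rightarrow> bool" where
  "is_gamma_cover X \<U> \<longleftrightarrow> is_cover X \<U> \<and> infinite \<U> \<and>
      (\<forall>x\<in>topspace X. finite {U\<in>\<U>. x \<notin> U})"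

definition GammaF_covers :: "'a topology \<Rightarrow> 'a set set set" where
  "GammaF_covers X = {\<U>. is_gamma_cover X \<U> \<and> (\<forall>U\<in>\<U>. cozero_set X U) \<and>
      (\<exists>F. (\<forall>U\<in>\<U>. zero_set X (F U) \<and> F U \<subseteq> U) \<and> is_gamma_cover X (F ` \<U>))}"

end

theory Submission
  imports Defs
begin


lemma topspace_Cp:
  "topspace (Cp X) = {f. continuous_map X euclideanreal f \<and> f \<in> extensional (topspace X)}"
  unfolding Cp_def by (auto simp: PiE_def)

lemma cont_proj_Cp:
  assumes "x \<in> topspace X"
  shows "continuous_map (Cp X) euclideanreal (\<lambda>g. g x)"
  unfolding Cp_def using assms by (intro continuous_map_from_subtopology continuous_map_product_projection)

lemma Cp_open:
  assumes "finite K" "K \<subseteq> topspace X"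
  shows "openin (Cp X) {g \<in> topspace (Cp X). \<forall>x\<in>K. \<bar>g x - f x\<bar> < d}"
  using assms
proof (induction K rule: finite_induct)
  case empty
  then show ?case by simp
next
  case (insert y K)
  have "openin (Cp X) {g \<in> topspace (Cp X). g y \<in> ball (f y) d}"
    using insert by (intro openin_continuous_map_preimage[OF cont_proj_Cp]) auto
  moreover have "{g \<in> topspace (Cp X). g y \<in> ball (f y) d} = {g \<in> topspace (Cp X). \<bar>g y - f y\<bar> < d}"
    by (auto simp: dist_real_def abs_minus_commute)
  ultimately have "openin (Cp X) ({g \<in> topspace (Cp X). \<bar>g y - f y\<bar> < d} \<inter> {g \<in> topspace (Cp X). \<forall>x\<in>K. \<bar>g x - f x\<bar> < d})"
    using insert by (intro openin_Int) auto
  moreover have "{g \<in> topspace (Cp X). \<bar>g y - f y\<bar> < d} \<inter> {g \<in> topspace (Cp X). \<forall>x\<in>K. \<bar>g x - f x\<bar> < d}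
     = {g \<in> topspace (Cp X). \<forall>x\<in>insert y K. \<bar>g x - f x\<bar> < d}" by auto
  ultimately show ?case by simp
qed

lemma Cp_basic:
  assumes "openin (Cp X) W" "f \<in> W"
  shows "\<exists>K d. finite K \<and> K \<subseteq> topspace X \<and> d > 0 \<and>
     {g \<in> topspace (Cp X). \<forall>x\<in>K. \<bar>g x - f x\<bar> < d} \<subseteq> W"
proof -
  let ?S = "{f. continuous_map X euclideanreal f \<and> f \<in> extensional (topspace X)}"
  obtain T where T: "openin (powertop_real (topspace X)) T" "W = T \<inter> ?S"
    using assms(1) unfolding Cp_def openin_subtopology by blast
  have fT: "f \<in> T" using T assms by auto
  obtain U where U: "f \<in> (\<Pi>\<^sub>E i\<in>topspace X. U i)" "\<forall>i. openin euclideanreal (U i)"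
    "finite {i. U i \<noteq> topspace euclideanreal}" "(\<Pi>\<^sub>E i\<in>topspace X. U i) \<subseteq> T"
    using product_topology_open_contains_basis[OF T(1) fT] by blast
  define K where "K = {i \<in> topspace X. U i \<noteq> UNIV}"
  have fK: "finite K" using U(3) unfolding K_def by (auto intro: finite_subset)
  have "\<forall>i\<in>K. \<exists>e>0. ball (f i) e \<subseteq> U i"
  proof
    fix i assume "i \<in> K"
    then have "f i \<in> U i" using U(1) K_def by auto
    then show "\<exists>e>0. ball (f i) e \<subseteq> U i" using U(2) open_contains_ball by auto
  qed
  then obtain e where e: "\<forall>i\<in>K. e i > 0 \<and> ball (f i) (e i) \<subseteq> U i" by metis
  define d where "d = Min (insert 1 (e ` K))"
  have dpos: "d > 0" unfolding d_def using fK e by auto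
  have dle: "d \<le> e i" if "i \<in> K" for i unfolding d_def using fK that by auto
  have "{g \<in> topspace (Cp X). \<forall>x\<in>K. \<bar>g x - f x\<bar> < d} \<subseteq> W"
  proof
    fix g assume g: "g \<in> {g \<in> topspace (Cp X). \<forall>x\<in>K. \<bar>g x - f x\<bar> < d}"
    then have gS: "g \<in> ?S" using topspace_Cp by blast
    have "g \<in> (\<Pi>\<^sub>E i\<in>topspace X. U i)"
    proof -
      have "g i \<in> U i" if "i \<in> topspace X" for i
      proof (cases "i \<in> K")
        case True
        then have "\<bar>g i - f i\<bar> < e i" using g dle[OF True] by auto
        then have "g i \<in> ball (f i) (e i)" by (auto simp: dist_real_def abs_minus_commute)
        then show ?thesis using e True by (meson mem_ball subsetD)
      next
        case False then show ?thesis using that K_def by auto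
      qed
      then show ?thesis using gS by (auto simp: PiE_def Pi_def)
    qed
    then show "g \<in> W" using U(4) T(2) gS by auto
  qed
  then show ?thesis using fK dpos K_def by blast
qed



lemma Cp_closure:
  assumes "S \<subseteq> topspace (Cp X)"
  shows "f \<in> Cp X closure_of S \<longleftrightarrow> f \<in> topspace (Cp X) \<and>
     (\<forall>K d. finite K \<and> K \<subseteq> topspace X \<and> d > 0 \<longrightarrow> (\<exists>s\<in>S. \<forall>x\<in>K. \<bar>s x - f x\<bar> < d))"
proof
  assume f: "f \<in> Cp X closure_of S"
  have ft: "f \<in> topspace (Cp X)" by (meson f closure_of_subset_topspace subsetD)
  have "\<exists>s\<in>S. \<forall>x\<in>K. \<bar>s x - f x\<bar> < d" if Kd: "finite K" "K \<subseteq> topspace X" "(d::real) > 0" for K d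
  proof -
    have o: "openin (Cp X) {g \<in> topspace (Cp X). \<forall>x\<in>K. \<bar>g x - f x\<bar> < d}"
      using Kd Cp_open by blast
    have m: "f \<in> {g \<in> topspace (Cp X). \<forall>x\<in>K. \<bar>g x - f x\<bar> < d}" using ft Kd by simp
    have al: "\<forall>T. f \<in> T \<and> openin (Cp X) T \<longrightarrow> (\<exists>y. y \<in> S \<and> y \<in> T)"
      using in_closure_of[of f "Cp X" S] f by (rule iffD1[THEN conjunct2])
    obtain y where "y \<in> S" "y \<in> {g \<in> topspace (Cp X). \<forall>x\<in>K. \<bar>g x - f x\<bar> < d}"
      using al[rule_format, OF conjI[OF m o]] by (elim exE conjE)
    then show ?thesis by blast
  qed
  then show "f \<in> topspace (Cp X) \<and>
     (\<forall>K d. finite K \<and> K \<subseteq> topspace X \<and> d > 0 \<longrightarrow> (\<exists>s\<in>S. \<forall>x\<in>K. \<bar>s x - f x\<bar> < d))"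
    using ft by blast
next
  assume R: "f \<in> topspace (Cp X) \<and>
     (\<forall>K d. finite K \<and> K \<subseteq> topspace X \<and> d > 0 \<longrightarrow> (\<exists>s\<in>S. \<forall>x\<in>K. \<bar>s x - f x\<bar> < d))"
  have "\<exists>y. y \<in> S \<and> y \<in> T" if T: "f \<in> T" "openin (Cp X) T" for T
  proof -
    obtain K d where Kd: "finite K" "K \<subseteq> topspace X" "d > 0"
      "{g \<in> topspace (Cp X). \<forall>x\<in>K. \<bar>g x - f x\<bar> < d} \<subseteq> T"
      using Cp_basic[of X T f] T by blast
    then obtain s where "s \<in> S" "\<forall>x\<in>K. \<bar>s x - f x\<bar> < d" using R by blast
    then show ?thesis using Kd assms by blast
  qed
  then show "f \<in> Cp X closure_of S" unfolding in_closure_of using R by blast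
qed
lemma Gamma_pw:
  assumes "A \<in> Gamma_at (Cp X) f" "f \<in> topspace (Cp X)" "x \<in> topspace X" "d > 0"
  shows "finite {a\<in>A. d \<le> \<bar>a x - f x\<bar>}"
proof -
  let ?W = "{g \<in> topspace (Cp X). \<forall>y\<in>{x}. \<bar>g y - f y\<bar> < d}"
  have "openin (Cp X) ?W" using assms Cp_open[of "{x}" X f d] by auto
  moreover have "f \<in> ?W" using assms by auto
  ultimately have "finite (A - ?W)" using assms(1) unfolding Gamma_at_def by blast
  moreover have "{a\<in>A. d \<le> \<bar>a x - f x\<bar>} \<subseteq> A - ?W" by auto
  ultimately show ?thesis using finite_subset by blast
qed

lemma Gamma_I:
  assumes "A \<subseteq> topspace (Cp X)" "infinite A" "f \<notin> A"
    "\<forall>x\<in>topspace X. finite {a\<in>A. a x \<noteq> f x}"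
  shows "A \<in> Gamma_at (Cp X) f"
  unfolding Gamma_at_def
proof (intro CollectI conjI allI impI assms)
  fix U assume U: "openin (Cp X) U \<and> f \<in> U"
  then obtain K d where Kd: "finite K" "K \<subseteq> topspace X" "d > 0"
      "{g \<in> topspace (Cp X). \<forall>x\<in>K. \<bar>g x - f x\<bar> < d} \<subseteq> U"
      using Cp_basic[of X U f] by blast
  have "A - U \<subseteq> (\<Union>x\<in>K. {a\<in>A. a x \<noteq> f x})"
  proof
    fix a assume a: "a \<in> A - U"
    then have "\<not> (\<forall>x\<in>K. \<bar>a x - f x\<bar> < d)" using Kd(4) assms(1) by blast
    then obtain x where "x \<in> K" "\<not> \<bar>a x - f x\<bar> < d" by blast
    then show "a \<in> (\<Union>x\<in>K. {a\<in>A. a x \<noteq> f x})" using a Kd(3) by (auto intro!: bexI[of _ x])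
  qed
  moreover have "finite (\<Union>x\<in>K. {a\<in>A. a x \<noteq> f x})" using Kd assms(4) by blast
  ultimately show "finite (A - U)" using finite_subset by blast
qed




lemma zero_setI:
  "continuous_map X euclideanreal g \<Longrightarrow> zero_set X {x \<in> topspace X. g x = 0}"
  unfolding zero_set_def by blast

lemma cozero_setI:
  assumes "continuous_map X euclideanreal g"
  shows "cozero_set X {x \<in> topspace X. g x \<noteq> 0}"
proof -
  have "{x \<in> topspace X. g x \<noteq> 0} = topspace X - {x \<in> topspace X. g x = 0}" by auto
  then show ?thesis unfolding cozero_set_def using zero_setI[OF assms] by blast
qed

lemma zero_set_sub: "zero_set X Z \<Longrightarrow> Z \<subseteq> topspace X"
  unfolding zero_set_def by auto

lemma cozero_set_sub: "cozero_set X U \<Longrightarrow> U \<subseteq> topspace X"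
  unfolding cozero_set_def by auto

lemma cozero_open:
  assumes "cozero_set X U" shows "openin X U"
proof -
  obtain g where g: "continuous_map X euclideanreal g" "U = topspace X - {x \<in> topspace X. g x = 0}"
    using assms unfolding cozero_set_def zero_set_def by blast
  have "openin X {x \<in> topspace X. g x \<in> - {0}}"
    by (rule openin_continuous_map_preimage[OF g(1)]) auto
  moreover have "{x \<in> topspace X. g x \<in> - {0}} = U" using g(2) by auto
  ultimately show ?thesis by simp
qed

lemma ex_not_in_finite:
  assumes "finite {k::nat. P k}" shows "\<exists>k. \<not> P k"
  using assms infinite_UNIV_nat by (metis (full_types) UNIV_I finite_subset mem_Collect_eq subsetI)

lemma gammaF_from_seq:
  fixes U F :: "nat \<Rightarrow> 'a set"
  assumes coz: "\<forall>k. cozero_set X (U k)" and zs: "\<forall>k. zero_set X (F k)"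
    and FU: "\<forall>k. F k \<subseteq> U k" and Une: "\<forall>k. U k \<noteq> topspace X"
    and pf: "\<forall>x\<in>topspace X. finite {k. x \<notin> F k}"
  shows "range U \<in> GammaF_covers X"
proof -
  let ?T = "topspace X"
  have US: "U k \<subseteq> ?T" for k using coz cozero_set_sub by blast
  have pfU: "finite {k. x \<notin> U k}" if "x \<in> ?T" for x
    using pf that FU by (rule_tac finite_subset[of _ "{k. x \<notin> F k}"]) auto
  have outside: "\<exists>y\<in>?T. y \<notin> U k" for k using US[of k] Une by blast
  have infU: "infinite (range U)"
  proof
    assume "finite (range U)"
    then obtain k0 where k0: "infinite {j \<in> UNIV. U j = U k0}"
      using pigeonhole_infinite[of "UNIV::nat set" U] by auto
    obtain y where y: "y \<in> ?T" "y \<notin> U k0" using outside by blast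
    have "{j \<in> UNIV. U j = U k0} \<subseteq> {k. y \<notin> U k}" using y by auto
    then show False using k0 pfU[OF y(1)] finite_subset by blast
  qed
  define kk where "kk V = (LEAST k. U k = V)" for V
  have kkU: "U (kk V) = V" if Vr: "V \<in> range U" for V
  proof -
    obtain k where "U k = V" using Vr by blast
    then show ?thesis unfolding kk_def by (rule LeastI)
  qed
  define M where "M = kk ` range U"
  have injkk: "inj_on kk (range U)" using kkU by (metis inj_onI)
  have infM: "infinite M" unfolding M_def using infU injkk finite_imageD by blast
  define F' where "F' V = F (kk V)" for V
  have F'img: "F' ` range U = F ` M" unfolding F'_def M_def by (simp add: image_image)
  have cover1: "is_gamma_cover X (range U)"
    unfolding is_gamma_cover_def is_cover_def
  proof (intro conjI ballI infU)
    show "\<Union> (range U) = ?T"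
    proof
      show "\<Union> (range U) \<subseteq> ?T" using US by blast
      show "?T \<subseteq> \<Union> (range U)"
      proof
        fix x assume x: "x \<in> ?T"
        obtain k where "\<not> x \<notin> U k" using ex_not_in_finite[OF pfU[OF x]] by blast
        then show "x \<in> \<Union> (range U)" by blast
      qed
    qed
    show "?T \<notin> range U" using Une by auto
    fix x assume x: "x \<in> ?T"
    have "{V \<in> range U. x \<notin> V} \<subseteq> U ` {k. x \<notin> U k}" by auto
    then show "finite {V \<in> range U. x \<notin> V}" using pfU[OF x] finite_subset by blast
  qed
  have infFM: "infinite (F ` M)"
  proof
    assume "finite (F ` M)"
    then obtain m0 where m0: "m0 \<in> M" "infinite {m \<in> M. F m = F m0}"
      using pigeonhole_infinite[OF infM] by blast
    obtain y where y: "y \<in> ?T" "y \<notin> U m0" using outside by blast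
    have "{m \<in> M. F m = F m0} \<subseteq> {k. y \<notin> F k}" using y FU by auto
    then show False using m0 pf y(1) finite_subset by blast
  qed
  have cover2: "is_gamma_cover X (F ` M)"
    unfolding is_gamma_cover_def is_cover_def
  proof (intro conjI ballI infFM)
    show "\<Union> (F ` M) = ?T"
    proof
      show "\<Union> (F ` M) \<subseteq> ?T" using zs zero_set_sub by blast
      show "?T \<subseteq> \<Union> (F ` M)"
      proof
        fix x assume x: "x \<in> ?T"
        have "{m \<in> M. x \<notin> F m} \<subseteq> {k. x \<notin> F k}" by auto
        then have "finite {m \<in> M. x \<notin> F m}" using pf x finite_subset by blast
        then obtain m where "m \<in> M" "x \<in> F m"
          using infM by (metis (mono_tags, lifting) Collect_mem_eq finite_Collect_conjI not_finite_existsD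
              finite_subset mem_Collect_eq subsetI)
        then show "x \<in> \<Union> (F ` M)" by blast
      qed
    qed
    show "?T \<notin> F ` M"
    proof
      assume "?T \<in> F ` M"
      then obtain m where "F m = ?T" by blast
      then show False using FU US Une by (metis subset_antisym)
    qed
    fix x assume x: "x \<in> ?T"
    have "{W \<in> F ` M. x \<notin> W} \<subseteq> F ` {k. x \<notin> F k}" by auto
    then show "finite {W \<in> F ` M. x \<notin> W}" using pf x finite_subset by blast
  qed
  have "\<forall>V\<in>range U. zero_set X (F' V) \<and> F' V \<subseteq> V"
    unfolding F'_def using zs FU kkU by metis
  then show ?thesis unfolding GammaF_covers_def using cover1 cover2 coz F'img
    by (intro CollectI conjI cover1 ballI exI[of _ F']) auto
qed




lemma Gamma_facts:
  assumes "A \<in> Gamma_at Y y"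
  shows "A \<subseteq> topspace Y" "infinite A" "y \<notin> A"
  using assms unfolding Gamma_at_def by auto

lemma omega_I:
  assumes f: "f \<in> topspace (Cp X)" and A: "\<forall>n. A n \<in> Gamma_at (Cp X) f"
    and b: "\<forall>n. b n \<in> A n"
    and cl: "\<forall>K d. finite K \<and> K \<subseteq> topspace X \<and> d > 0 \<longrightarrow> (\<exists>n. \<forall>x\<in>K. \<bar>b n x - f x\<bar> < d)"
  shows "range b \<in> Omega_at (Cp X) f"
proof -
  have sub: "range b \<subseteq> topspace (Cp X)"
  proof
    fix g assume "g \<in> range b"
    then obtain n where "g = b n" by blast
    then show "g \<in> topspace (Cp X)" using b Gamma_facts(1)[OF A[rule_format, of n]] by blast
  qed
  have nf: "f \<notin> range b"
  proof
    assume "f \<in> range b"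
    then obtain n where "f = b n" by blast
    then have "f \<in> A n" using b by simp
    then show False using Gamma_facts(3)[OF A[rule_format, of n]] by simp
  qed
  have "f \<in> Cp X closure_of range b"
  proof (rule iffD2[OF Cp_closure[OF sub]], intro conjI f allI impI)
    fix K d assume "finite K \<and> K \<subseteq> topspace X \<and> (d::real) > 0"
    then obtain n where "\<forall>x\<in>K. \<bar>b n x - f x\<bar> < d" using cl by blast
    then show "\<exists>s\<in>range b. \<forall>x\<in>K. \<bar>s x - f x\<bar> < d" by blast
  qed
  then show ?thesis unfolding Omega_at_def using sub nf by blast
qed

lemma inv_Suc_mono: "N \<le> n \<Longrightarrow> inverse (real (Suc n)) \<le> inverse (real (Suc N))"
  by (auto intro!: le_imp_inverse_le)

lemma Cp_cont: "g \<in> topspace (Cp X) \<Longrightarrow> continuous_map X euclideanreal g"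
  using topspace_Cp by blast

lemma inj_seq_in:
  assumes "infinite S" obtains g :: "nat \<Rightarrow> 'b" where "inj g" "range g \<subseteq> S"
  using infinite_countable_subset[OF assms] by blast




lemma dir21_uniform:
  assumes f: "f \<in> topspace (Cp X)" and A: "\<forall>n. A n \<in> Gamma_at (Cp X) f"
    and uni: "\<forall>n. finite {a \<in> A n. \<exists>x\<in>topspace X. inverse (real (Suc n)) \<le> \<bar>a x - f x\<bar>}"
  shows "\<exists>b. (\<forall>n. b n \<in> A n) \<and> range b \<in> Omega_at (Cp X) f"
proof -
  have "\<exists>a. a \<in> A n \<and> (\<forall>x\<in>topspace X. \<bar>a x - f x\<bar> < inverse (real (Suc n)))" for n
  proof -
    have "infinite (A n - {a \<in> A n. \<exists>x\<in>topspace X. inverse (real (Suc n)) \<le> \<bar>a x - f x\<bar>})"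
      using Gamma_facts(2)[OF A[rule_format, of n]] uni Diff_infinite_finite by blast
    then obtain a where "a \<in> A n - {a \<in> A n. \<exists>x\<in>topspace X. inverse (real (Suc n)) \<le> \<bar>a x - f x\<bar>}"
      using infinite_imp_nonempty by blast
    then show ?thesis by (intro exI[of _ a]) auto
  qed
  then obtain b where b: "\<forall>n. b n \<in> A n" "\<forall>n. \<forall>x\<in>topspace X. \<bar>b n x - f x\<bar> < inverse (real (Suc n))"
    by metis
  have cl: "\<forall>K d. finite K \<and> K \<subseteq> topspace X \<and> d > 0 \<longrightarrow> (\<exists>n. \<forall>x\<in>K. \<bar>b n x - f x\<bar> < d)"
  proof (intro allI impI)
    fix K d assume Kd: "finite K \<and> K \<subseteq> topspace X \<and> (d::real) > 0"
    then obtain n where n: "inverse (real (Suc n)) < d" using reals_Archimedean by blast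
    have "\<forall>x\<in>K. \<bar>b n x - f x\<bar> < d"
    proof
      fix x assume "x \<in> K"
      then have "\<bar>b n x - f x\<bar> < inverse (real (Suc n))" using b(2) Kd by blast
      then show "\<bar>b n x - f x\<bar> < d" using n by linarith
    qed
    then show "\<exists>n. \<forall>x\<in>K. \<bar>b n x - f x\<bar> < d" by blast
  qed
  show ?thesis using omega_I[OF f A b(1) cl] b(1) by blast
qed




lemma dir21_nonuniform:
  fixes X :: "'a topology" and A :: "nat \<Rightarrow> ('a \<Rightarrow> real) set"
  assumes S: "S1 (GammaF_covers X) (omega_covers X)"
    and f: "f \<in> topspace (Cp X)" and A: "\<forall>n. A n \<in> Gamma_at (Cp X) f"
    and e: "e > 0"
    and nu: "infinite {a \<in> A m. \<exists>x\<in>topspace X. e \<le> \<bar>a x - f x\<bar>}"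
  shows "\<exists>b. (\<forall>n. b n \<in> A n) \<and> range b \<in> Omega_at (Cp X) f"
proof -
  let ?T = "topspace X"
  have fc: "continuous_map X euclideanreal f" using Cp_cont[OF f] .
  obtain c :: "nat \<Rightarrow> 'a \<Rightarrow> real" where c: "inj c" "range c \<subseteq> {a \<in> A m. \<exists>x\<in>?T. e \<le> \<bar>a x - f x\<bar>}"
    using infinite_countable_subset[OF nu] by (elim exE conjE) (rule that)
  have cmem: "c k \<in> {a \<in> A m. \<exists>x\<in>?T. e \<le> \<bar>a x - f x\<bar>}" for k
    using c(2) rangeI[of c k] by (rule subsetD)
  have "\<forall>k. \<exists>q. q \<in> ?T \<and> e \<le> \<bar>c k q - f q\<bar>"
  proof
    fix k show "\<exists>q. q \<in> ?T \<and> e \<le> \<bar>c k q - f q\<bar>" using cmem[of k] by auto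
  qed
  then obtain p where p: "\<forall>k. p k \<in> ?T \<and> e \<le> \<bar>c k (p k) - f (p k)\<bar>" by (rule choice[THEN exE])
  have cA: "c k \<in> A m" for k using cmem[of k] by simp
  have cc: "continuous_map X euclideanreal (c k)" for k
  proof -
    have "c k \<in> topspace (Cp X)" using Gamma_facts(1)[OF A[rule_format, of m]] cA[of k] by (rule subsetD)
    then show ?thesis by (rule Cp_cont)
  qed
  define \<psi> where "\<psi> k x = \<bar>c k x - f x\<bar>" for k x
  have \<psi>c: "continuous_map X euclideanreal (\<psi> k)" for k
    unfolding \<psi>_def using cc fc by (intro continuous_intros) auto
  have \<psi>pf: "finite {k. e/2 < \<psi> k x}" if x: "x \<in> ?T" for x
  proof -
    have "finite {a \<in> A m. e/2 \<le> \<bar>a x - f x\<bar>}"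
      by (rule Gamma_pw[OF A[rule_format, of m] f x]) (use e in simp)
    then have "finite (c -` {a \<in> A m. e/2 \<le> \<bar>a x - f x\<bar>})"
      using c(1) by (rule finite_vimageI)
    moreover have "{k. e/2 < \<psi> k x} \<subseteq> c -` {a \<in> A m. e/2 \<le> \<bar>a x - f x\<bar>}"
      unfolding \<psi>_def using cA by auto
    ultimately show ?thesis using finite_subset by blast
  qed
  have "\<forall>n. \<exists>g::nat \<Rightarrow> 'a \<Rightarrow> real. inj g \<and> range g \<subseteq> A n"
  proof
    fix n show "\<exists>g::nat \<Rightarrow> 'a \<Rightarrow> real. inj g \<and> range g \<subseteq> A n"
      using infinite_countable_subset[OF Gamma_facts(2)[OF A[rule_format, of n]]] .
  qed
  then obtain a :: "nat \<Rightarrow> nat \<Rightarrow> 'a \<Rightarrow> real" where a: "\<forall>n. inj (a n) \<and> range (a n) \<subseteq> A n" by (rule choice[THEN exE])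
  have aA: "a n k \<in> A n" for n k using a by blast
  have ac: "continuous_map X euclideanreal (a n k)" for n k
  proof -
    have "a n k \<in> topspace (Cp X)" using Gamma_facts(1)[OF A[rule_format, of n]] aA[of n k] by (rule subsetD)
    then show ?thesis by (rule Cp_cont)
  qed
  define \<delta> where "\<delta> n = inverse (real (Suc n))" for n
  have \<delta>pos: "\<delta> n > 0" for n unfolding \<delta>_def by simp
  define U where "U n k = {x \<in> ?T. \<bar>a n k x - f x\<bar> < \<delta> n \<and> \<psi> k x < e}" for n k
  define F where "F n k = {x \<in> ?T. \<bar>a n k x - f x\<bar> \<le> \<delta> n / 2 \<and> \<psi> k x \<le> e / 2}" for n k
  have dc: "continuous_map X euclideanreal (\<lambda>x. \<bar>a n k x - f x\<bar>)" for n k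
    by (rule continuous_map_real_abs[OF continuous_map_diff[OF ac fc]])
  have Ucoz: "cozero_set X (U n k)" for n k
  proof -
    let ?h = "\<lambda>x. max 0 (\<delta> n - \<bar>a n k x - f x\<bar>) * max 0 (e - \<psi> k x)"
    have hc: "continuous_map X euclideanreal ?h"
      by (rule continuous_map_real_mult[OF continuous_map_real_max[OF continuous_map_canonical_const
            continuous_map_diff[OF continuous_map_canonical_const dc]]
            continuous_map_real_max[OF continuous_map_canonical_const
            continuous_map_diff[OF continuous_map_canonical_const \<psi>c]]])
    have eq: "U n k = {x \<in> ?T. ?h x \<noteq> 0}"
      unfolding U_def by (auto simp: max_def)
    show ?thesis unfolding eq by (rule cozero_setI[OF hc])
  qed
  have Fzs: "zero_set X (F n k)" for n k
  proof -
    let ?h = "\<lambda>x. max 0 (\<bar>a n k x - f x\<bar> - \<delta> n / 2) + max 0 (\<psi> k x - e / 2)"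
    have hc: "continuous_map X euclideanreal ?h"
      by (rule continuous_map_add[OF continuous_map_real_max[OF continuous_map_canonical_const
            continuous_map_diff[OF dc continuous_map_canonical_const]]
            continuous_map_real_max[OF continuous_map_canonical_const
            continuous_map_diff[OF \<psi>c continuous_map_canonical_const]]])
    have eq: "F n k = {x \<in> ?T. ?h x = 0}"
      unfolding F_def by (auto simp: max_def)
    show ?thesis unfolding eq by (rule zero_setI[OF hc])
  qed
  have FU: "F n k \<subseteq> U n k" for n k
    unfolding F_def U_def using \<delta>pos[of n] e by auto
  have Une: "U n k \<noteq> ?T" for n k
  proof
    assume "U n k = ?T"
    then have "p k \<in> U n k" using p by auto
    then have "\<bar>c k (p k) - f (p k)\<bar> < e" unfolding U_def \<psi>_def by auto
    moreover have "e \<le> \<bar>c k (p k) - f (p k)\<bar>" using p by blast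
    ultimately show False by linarith
  qed
  have Fpf: "finite {k. x \<notin> F n k}" if x: "x \<in> ?T" for n x
  proof -
    have "finite {a' \<in> A n. \<delta> n / 2 \<le> \<bar>a' x - f x\<bar>}"
      by (rule Gamma_pw[OF A[rule_format, of n] f x]) (use \<delta>pos[of n] in simp)
    then have f1: "finite (a n -` {a' \<in> A n. \<delta> n / 2 \<le> \<bar>a' x - f x\<bar>})"
      using a[rule_format, of n, THEN conjunct1] by (rule finite_vimageI)
    have "{k. x \<notin> F n k} \<subseteq> (a n -` {a' \<in> A n. \<delta> n / 2 \<le> \<bar>a' x - f x\<bar>}) \<union> {k. e/2 < \<psi> k x}"
      unfolding F_def using x aA by auto
    then show ?thesis using f1 \<psi>pf[OF x] finite_subset by blast
  qed
  have G: "range (U n) \<in> GammaF_covers X" for n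
    by (rule gammaF_from_seq[of X "U n" "F n"]) (use Ucoz Fzs FU Une Fpf in auto)
  have "\<exists>V. (\<forall>n. V n \<in> range (U n)) \<and> range V \<in> omega_covers X"
    using S[unfolded S1_def, rule_format, of "\<lambda>n. range (U n)"] G by simp
  then obtain V :: "nat \<Rightarrow> 'a set" where V: "\<forall>n. V n \<in> range (U n)" "range V \<in> omega_covers X"
    by (elim exE conjE)
  have "\<forall>n. \<exists>k. V n = U n k" using V(1) by (simp add: image_iff)
  then obtain kn :: "nat \<Rightarrow> nat" where kn: "\<forall>n. V n = U n (kn n)" by (rule choice[THEN exE])
  define b where "b n = a n (kn n)" for n
  have bA: "\<forall>n. b n \<in> A n" unfolding b_def using aA by simp
  have Vcov: "\<Union>(range V) = ?T" "?T \<notin> range V"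
    "\<forall>F. finite F \<and> F \<subseteq> ?T \<longrightarrow> (\<exists>W\<in>range V. F \<subseteq> W)"
    using V(2) unfolding omega_covers_def is_cover_def by simp_all
  have "\<forall>j. \<exists>y. y \<in> ?T \<and> y \<notin> V j"
  proof
    fix j
    have "V j \<subseteq> ?T" using Vcov(1) by blast
    moreover have "V j \<noteq> ?T" using Vcov(2) by auto
    ultimately show "\<exists>y. y \<in> ?T \<and> y \<notin> V j" by blast
  qed
  then obtain y :: "nat \<Rightarrow> 'a" where y: "\<forall>j. y j \<in> ?T \<and> y j \<notin> V j" by (rule choice[THEN exE])
  have cl: "\<forall>K d. finite K \<and> K \<subseteq> ?T \<and> d > 0 \<longrightarrow> (\<exists>n. \<forall>x\<in>K. \<bar>b n x - f x\<bar> < d)"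
  proof (intro allI impI)
    fix K d assume Kd: "finite K \<and> K \<subseteq> ?T \<and> (d::real) > 0"
    then obtain N where N: "inverse (real (Suc N)) < d" using reals_Archimedean by blast
    let ?K = "K \<union> y ` {..<N}"
    have yT: "y ` {..<N} \<subseteq> ?T" using y by blast
    have "finite ?K \<and> ?K \<subseteq> ?T" using Kd yT by simp
    then have "\<exists>W\<in>range V. ?K \<subseteq> W" using Vcov(3) by (rule_tac mp[OF spec[OF Vcov(3)]])
    then obtain n where n: "?K \<subseteq> V n" by blast
    have nN: "N \<le> n"
    proof (rule ccontr)
      assume "\<not> N \<le> n"
      then have "y n \<in> ?K" by auto
      then have "y n \<in> V n" using n by blast
      then show False using y by simp
    qed
    have "\<forall>x\<in>K. \<bar>b n x - f x\<bar> < d"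
    proof
      fix x assume "x \<in> K"
      then have "x \<in> V n" using n by blast
      then have "x \<in> U n (kn n)" using kn by simp
      then have "\<bar>b n x - f x\<bar> < \<delta> n" unfolding U_def b_def by auto
      moreover have "\<delta> n \<le> inverse (real (Suc N))" unfolding \<delta>_def using inv_Suc_mono[OF nN] .
      ultimately show "\<bar>b n x - f x\<bar> < d" using N by linarith
    qed
    then show "\<exists>n. \<forall>x\<in>K. \<bar>b n x - f x\<bar> < d" by blast
  qed
  show ?thesis using omega_I[OF f A bA cl] bA by blast
qed




lemma sep_fun:
  assumes Z: "zero_set X Z" and U: "cozero_set X U" and ZU: "Z \<subseteq> U"
  shows "\<exists>h. h \<in> topspace (Cp X) \<and> (\<forall>x\<in>Z. h x = 0) \<and> (\<forall>x\<in>topspace X - U. h x = 1)"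
proof -
  let ?T = "topspace X"
  obtain \<alpha> where \<alpha>: "continuous_map X euclideanreal \<alpha>" "Z = {x \<in> ?T. \<alpha> x = 0}"
    using Z unfolding zero_set_def by blast
  obtain Z' where Z': "zero_set X Z'" "U = ?T - Z'" using U unfolding cozero_set_def by blast
  obtain \<beta> where \<beta>: "continuous_map X euclideanreal \<beta>" "Z' = {x \<in> ?T. \<beta> x = 0}"
    using Z'(1) unfolding zero_set_def by blast
  have nz: "\<bar>\<alpha> x\<bar> + \<bar>\<beta> x\<bar> \<noteq> 0" if x: "x \<in> ?T" for x
  proof
    assume "\<bar>\<alpha> x\<bar> + \<bar>\<beta> x\<bar> = 0"
    then have "\<alpha> x = 0" "\<beta> x = 0" by auto
    then have "x \<in> Z" "x \<in> Z'" using x \<alpha>(2) \<beta>(2) by auto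
    then show False using ZU Z'(2) by auto
  qed
  define h where "h x = (if x \<in> ?T then \<bar>\<alpha> x\<bar> / (\<bar>\<alpha> x\<bar> + \<bar>\<beta> x\<bar>) else undefined)" for x
  have c0: "continuous_map X euclideanreal (\<lambda>x. \<bar>\<alpha> x\<bar> / (\<bar>\<alpha> x\<bar> + \<bar>\<beta> x\<bar>))"
    by (rule continuous_map_real_divide[OF continuous_map_real_abs[OF \<alpha>(1)]
        continuous_map_add[OF continuous_map_real_abs[OF \<alpha>(1)] continuous_map_real_abs[OF \<beta>(1)]] nz])
  have hc: "continuous_map X euclideanreal h"
    by (rule continuous_map_eq[OF c0]) (simp add: h_def)
  have he: "h \<in> extensional ?T" unfolding h_def extensional_def by simp
  have h0: "\<forall>x\<in>Z. h x = 0" unfolding h_def using \<alpha>(2) by auto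
  have h1: "\<forall>x\<in>?T - U. h x = 1"
  proof
    fix x assume x: "x \<in> ?T - U"
    then have "\<beta> x = 0" using Z'(2) \<beta>(2) by auto
    moreover have "\<alpha> x \<noteq> 0" using x ZU \<alpha>(2) by auto
    ultimately show "h x = 1" unfolding h_def using x by simp
  qed
  show ?thesis using hc he h0 h1 unfolding topspace_Cp by blast
qed




lemma dir12:
  fixes X :: "'a topology"
  assumes L: "\<forall>f\<in>topspace (Cp X). S1 (Gamma_at (Cp X) f) (Omega_at (Cp X) f)"
  shows "S1 (GammaF_covers X) (omega_covers X)"
  unfolding S1_def
proof (intro allI impI)
  let ?T = "topspace X"
  fix \<U> :: "nat \<Rightarrow> 'a set set" assume G: "\<forall>n. \<U> n \<in> GammaF_covers X"
  have "\<forall>n. \<exists>F. (\<forall>U\<in>\<U> n. zero_set X (F U) \<and> F U \<subseteq> U) \<and> is_gamma_cover X (F ` \<U> n)"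
    using G unfolding GammaF_covers_def by simp
  then obtain Fn :: "nat \<Rightarrow> 'a set \<Rightarrow> 'a set" where
    Fn: "\<forall>n. (\<forall>U\<in>\<U> n. zero_set X (Fn n U) \<and> Fn n U \<subseteq> U) \<and> is_gamma_cover X (Fn n ` \<U> n)"
    by (rule choice[THEN exE])
  have Ucov: "is_gamma_cover X (\<U> n)" "\<forall>U\<in>\<U> n. cozero_set X U" for n
    using G unfolding GammaF_covers_def by auto
  have UT: "\<Union>(\<U> n) = ?T" "?T \<notin> \<U> n" "infinite (\<U> n)" for n
    using Ucov(1)[of n] unfolding is_gamma_cover_def is_cover_def by auto
  have FG: "infinite (Fn n ` \<U> n)" "\<forall>x\<in>?T. finite {V \<in> Fn n ` \<U> n. x \<notin> V}" for n
    using Fn unfolding is_gamma_cover_def by auto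
  define g where "g n V = (SOME U. U \<in> \<U> n \<and> Fn n U = V)" for n V
  have gp: "g n V \<in> \<U> n \<and> Fn n (g n V) = V" if "V \<in> Fn n ` \<U> n" for n V
  proof -
    have "\<exists>U. U \<in> \<U> n \<and> Fn n U = V" using that by blast
    then show ?thesis unfolding g_def by (rule someI_ex)
  qed
  define \<U>' where "\<U>' n = g n ` (Fn n ` \<U> n)" for n
  have U'U: "U \<in> \<U> n" if "U \<in> \<U>' n" for n U using that gp unfolding \<U>'_def by auto
  have U'inf: "infinite (\<U>' n)" for n
  proof -
    have "inj_on (g n) (Fn n ` \<U> n)" by (rule inj_onI) (metis gp)
    then show ?thesis unfolding \<U>'_def using FG(1)[of n] finite_imageD by blast
  qed
  have Pfin: "finite {U \<in> \<U>' n. x \<notin> Fn n U}" if x: "x \<in> ?T" for n x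
  proof -
    have "{U \<in> \<U>' n. x \<notin> Fn n U} \<subseteq> g n ` {V \<in> Fn n ` \<U> n. x \<notin> V}"
    proof
      fix U assume "U \<in> {U \<in> \<U>' n. x \<notin> Fn n U}"
      then obtain V where V: "V \<in> Fn n ` \<U> n" "U = g n V" "x \<notin> Fn n U" unfolding \<U>'_def by blast
      then have "Fn n U = V" using gp by blast
      then show "U \<in> g n ` {V \<in> Fn n ` \<U> n. x \<notin> V}" using V by blast
    qed
    moreover have "finite (g n ` {V \<in> Fn n ` \<U> n. x \<notin> V})" using FG(2)[of n] x by blast
    ultimately show ?thesis using finite_subset by blast
  qed
  have exh: "\<exists>h. h \<in> topspace (Cp X) \<and> (\<forall>x\<in>Fn n U. h x = 0) \<and> (\<forall>x\<in>?T - U. h x = 1)"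
    if U: "U \<in> \<U> n" for n U
    using sep_fun[of X "Fn n U" U] Fn Ucov(2)[of n] U by blast
  define H :: "nat \<Rightarrow> 'a set \<Rightarrow> 'a \<Rightarrow> real" where
    "H n U = (SOME h. h \<in> topspace (Cp X) \<and> (\<forall>x\<in>Fn n U. h x = 0) \<and> (\<forall>x\<in>?T - U. h x = 1))" for n U
  have H: "H n U \<in> topspace (Cp X) \<and> (\<forall>x\<in>Fn n U. H n U x = 0) \<and> (\<forall>x\<in>?T - U. H n U x = 1)"
    if U: "U \<in> \<U> n" for n U
    unfolding H_def by (rule someI_ex[OF exh[OF U]])
  define z :: "'a \<Rightarrow> real" where "z x = (if x \<in> ?T then 0 else undefined)" for x
  have zT: "z \<in> topspace (Cp X)"
  proof -
    have "continuous_map X euclideanreal (\<lambda>x. 0::real)" by simp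
    then have "continuous_map X euclideanreal z" by (rule continuous_map_eq) (simp add: z_def)
    moreover have "z \<in> extensional ?T" unfolding z_def extensional_def by simp
    ultimately show ?thesis unfolding topspace_Cp by blast
  qed
  define A where "A n = H n ` \<U>' n" for n
  have outside: "\<exists>y. y \<in> ?T \<and> y \<notin> U" if "U \<in> \<U> n" for n U
  proof -
    have "U \<subseteq> ?T" using UT(1)[of n] that by blast
    moreover have "U \<noteq> ?T" using UT(2)[of n] that by auto
    ultimately show ?thesis by blast
  qed
  have AG: "A n \<in> Gamma_at (Cp X) z" for n
  proof (rule Gamma_I)
    show "A n \<subseteq> topspace (Cp X)" unfolding A_def using H U'U by blast
    show "z \<notin> A n"
    proof
      assume "z \<in> A n"
      then obtain U where U: "U \<in> \<U>' n" "z = H n U" unfolding A_def by blast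
      have Un: "U \<in> \<U> n" by (rule U'U[OF U(1)])
      obtain y where y: "y \<in> ?T" "y \<notin> U" using outside[OF Un] by blast
      have "H n U y = 1" using H[OF Un] y by blast
      moreover have "z y = 0" using y unfolding z_def by simp
      ultimately show False using U(2) by simp
    qed
    have pw: "{a \<in> A n. a x \<noteq> z x} \<subseteq> H n ` {U \<in> \<U>' n. x \<notin> Fn n U}" if x: "x \<in> ?T" for x
    proof
      fix a assume "a \<in> {a \<in> A n. a x \<noteq> z x}"
      then obtain U where U: "U \<in> \<U>' n" "a = H n U" "a x \<noteq> z x" unfolding A_def by blast
      have "x \<notin> Fn n U"
      proof
        assume "x \<in> Fn n U"
        then have "H n U x = 0" using H[OF U'U[OF U(1)]] by blast
        then show False using U x unfolding z_def by simp
      qed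
      then show "a \<in> H n ` {U \<in> \<U>' n. x \<notin> Fn n U}" using U by blast
    qed
    show "\<forall>x\<in>?T. finite {a \<in> A n. a x \<noteq> z x}"
    proof
      fix x assume x: "x \<in> ?T"
      show "finite {a \<in> A n. a x \<noteq> z x}"
        using pw[OF x] finite_imageI[OF Pfin[OF x, of n], of "H n"] finite_subset by blast
    qed
    show "infinite (A n)"
    proof
      assume fin: "finite (A n)"
      obtain U0 where U0: "U0 \<in> \<U>' n" "infinite {U \<in> \<U>' n. H n U = H n U0}"
        using pigeonhole_infinite[OF U'inf[of n], of "H n"] fin unfolding A_def by blast
      have U0n: "U0 \<in> \<U> n" by (rule U'U[OF U0(1)])
      obtain y where y: "y \<in> ?T" "y \<notin> U0" using outside[OF U0n] by blast
      have Hy: "H n U0 y = 1" using H[OF U0n] y by blast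
      have "{U \<in> \<U>' n. H n U = H n U0} \<subseteq> {U \<in> \<U>' n. y \<notin> Fn n U}"
      proof
        fix U assume U: "U \<in> {U \<in> \<U>' n. H n U = H n U0}"
        have "y \<notin> Fn n U"
        proof
          assume "y \<in> Fn n U"
          then have "H n U y = 0" using H[OF U'U] U by blast
          then show False using U Hy by simp
        qed
        then show "U \<in> {U \<in> \<U>' n. y \<notin> Fn n U}" using U by blast
      qed
      then show False using U0(2) Pfin[OF y(1), of n] finite_subset by blast
    qed
  qed
  have "\<exists>b. (\<forall>n. b n \<in> A n) \<and> range b \<in> Omega_at (Cp X) z"
    using L[rule_format, OF zT, unfolded S1_def, rule_format, of A] AG by blast
  then obtain b :: "nat \<Rightarrow> 'a \<Rightarrow> real" where b: "\<forall>n. b n \<in> A n" "range b \<in> Omega_at (Cp X) z"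
    by (elim exE conjE)
  have "\<forall>n. \<exists>U. U \<in> \<U>' n \<and> b n = H n U" using b(1) unfolding A_def by blast
  then obtain W :: "nat \<Rightarrow> 'a set" where W: "\<forall>n. W n \<in> \<U>' n \<and> b n = H n (W n)"
    by (rule choice[THEN exE])
  have Wn: "W n \<in> \<U> n" for n using W U'U by blast
  have bsub: "range b \<subseteq> topspace (Cp X)" using b(2) unfolding Omega_at_def by blast
  have zcl: "z \<in> Cp X closure_of range b" using b(2) unfolding Omega_at_def by blast
  have appr: "\<forall>K d. finite K \<and> K \<subseteq> ?T \<and> d > 0 \<longrightarrow> (\<exists>s\<in>range b. \<forall>x\<in>K. \<bar>s x - z x\<bar> < d)"
    using zcl unfolding Cp_closure[OF bsub] by (rule conjunct2)
  have key: "\<exists>n. K \<subseteq> W n" if K: "finite K" "K \<subseteq> ?T" for K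
  proof -
    obtain s where s: "s \<in> range b" "\<forall>x\<in>K. \<bar>s x - z x\<bar> < 1"
      using appr[rule_format, of K 1] K by auto
    then obtain n where n: "s = b n" by blast
    have "K \<subseteq> W n"
    proof
      fix x assume x: "x \<in> K"
      show "x \<in> W n"
      proof (rule ccontr)
        assume "x \<notin> W n"
        then have "H n (W n) x = 1" using H[OF Wn[of n]] x K(2) by blast
        moreover have "z x = 0" using x K(2) unfolding z_def by auto
        moreover have "\<bar>b n x - z x\<bar> < 1" using s(2) x n by blast
        ultimately show False using W by simp
      qed
    qed
    then show ?thesis by blast
  qed
  have "range W \<in> omega_covers X"
    unfolding omega_covers_def is_cover_def
  proof (intro CollectI conjI ballI allI impI)
    show "\<Union> (range W) = ?T"
    proof
      show "\<Union> (range W) \<subseteq> ?T" using Wn UT(1) by blast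
      show "?T \<subseteq> \<Union> (range W)"
      proof
        fix x assume "x \<in> ?T"
        then obtain n where "{x} \<subseteq> W n" using key[of "{x}"] by auto
        then show "x \<in> \<Union> (range W)" by blast
      qed
    qed
    show "?T \<notin> range W"
    proof
      assume "?T \<in> range W"
      then obtain n where "?T = W n" by blast
      then show False using Wn[of n] UT(2)[of n] by simp
    qed
    fix U assume "U \<in> range W"
    then obtain n where "U = W n" by blast
    then show "openin X U" using Ucov(2)[of n] Wn[of n] cozero_open by blast
  next
    fix F assume "finite F \<and> F \<subseteq> ?T"
    then obtain n where "F \<subseteq> W n" using key by blast
    then show "\<exists>U\<in>range W. F \<subseteq> U" by blast
  qed
  then show "\<exists>b. (\<forall>n. b n \<in> \<U> n) \<and> range b \<in> omega_covers X" using Wn by blast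
qed



theorem mainTheorem5:
  fixes X :: "'a topology"
  assumes "tychonoff_space X"
  shows "(\<forall>f\<in>topspace (Cp X). S1 (Gamma_at (Cp X) f) (Omega_at (Cp X) f))
         \<longleftrightarrow> S1 (GammaF_covers X) (omega_covers X)"
proof
  assume L: "\<forall>f\<in>topspace (Cp X). S1 (Gamma_at (Cp X) f) (Omega_at (Cp X) f)"
  show "S1 (GammaF_covers X) (omega_covers X)" by (rule dir12[OF L])
next
  assume R: "S1 (GammaF_covers X) (omega_covers X)"
  show "\<forall>f\<in>topspace (Cp X). S1 (Gamma_at (Cp X) f) (Omega_at (Cp X) f)"
  proof
    fix f assume f: "f \<in> topspace (Cp X)"
    show "S1 (Gamma_at (Cp X) f) (Omega_at (Cp X) f)"
      unfolding S1_def
    proof (intro allI impI)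
      fix A :: "nat \<Rightarrow> ('a \<Rightarrow> real) set"
      assume A: "\<forall>n. A n \<in> Gamma_at (Cp X) f"
      show "\<exists>b. (\<forall>n. b n \<in> A n) \<and> range b \<in> Omega_at (Cp X) f"
      proof (cases "\<forall>n. finite {a \<in> A n. \<exists>x\<in>topspace X. inverse (real (Suc n)) \<le> \<bar>a x - f x\<bar>}")
        case True
        then show ?thesis by (rule dir21_uniform[OF f A])
      next
        case False
        then obtain m where m: "infinite {a \<in> A m. \<exists>x\<in>topspace X. inverse (real (Suc m)) \<le> \<bar>a x - f x\<bar>}"
          by blast
        have e: "inverse (real (Suc m)) > 0" by simp
        show ?thesis by (rule dir21_nonuniform[OF R f A e m])
      qed
    qed
  qed
qed

end
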